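(* If a $C_{p^rq^s}$-transfer system has three or more connected components, then it is not lesser simply paired.
   Context: $p,q$ are distinct primes and $r,s\ge 0$ integers. The subgroups of $C_{p^rq^s}$ are identified with grid points $(i,j)$, $0\le i\le r$, $0\le j\le s$, where $(i,j)$ stands for $C_{p^iq^j}$ (intersection is coordinatewise minimum). A $C_{p^rq^s}$-transfer system is a partial order $\to$ on these vertices such that: $(i_1,j_1)\to(i_2,j_2)$ implies $i_1\le i_2$, $j_1\le j_2$; it is reflexive and transitive; and $(i_1,j_1)\to(i_2,j_2)$ implies $(\min\{i_1,a\},\min\{j_1,b\})\to(\min\{i_2,a\},\min\{j_2,b\})$ for every vertex $(a,b)$. Connected components are those of the underlying undirected graph. A transfer system is saturated if whenever $L\le K\le H$ and $L\to H$ is in it then $K\to H$ is in it; $\mathrm{Hull}(T)$ is the smallest saturated transfer system containing $T$; $T_c$ is the complete transfer system (all $K\to H$ with $K\le H$). A pair $(T,T')$ is compatible if $T\subseteq T'$ and for all subgroups $A,B,C$ with $B,C\le A$: if $B\to A$ is in $T$ and $B\cap C\to B$ is in $T'$ then $C\to A$ is in $T'$. $T$ is lesser simply paired if for every transfer system $T'\supseteq T$, $(T,T')$ is compatible iff $T'\in\{\mathrm{Hull}(T),T_c\}$. *)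

theory Defs
  imports Main "HOL-Computational_Algebra.Primes"
begin

text \<open>Subgroups of C_{p^r q^s} are identified with grid points (i,j), 0<=i<=r, 0<=j<=s.
 A transfer system is represented as the set of pairs (K,H) with K -> H.\<close>

type_synonym vtx = "nat \<times> nat"

definition grid :: "nat \<Rightarrow> nat \<Rightarrow> vtx set" where
  "grid r s = {0..r} \<times> {0..s}"

definition le_v :: "vtx \<Rightarrow> vtx \<Rightarrow> bool" where
  "le_v x y \<longleftrightarrow> fst x \<le> fst y \<and> snd x \<le> snd y"

definition meet_v :: "vtx \<Rightarrow> vtx \<Rightarrow> vtx" where
  "meet_v x y = (min (fst x) (fst y), min (snd x) (snd y))"

definition transfer_system :: "nat \<Rightarrow> nat \<Rightarrow> vtx rel \<Rightarrow> bool" where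
  "transfer_system r s T \<longleftrightarrow>
     T \<subseteq> grid r s \<times> grid r s \<and>
     (\<forall>(x,y)\<in>T. le_v x y) \<and>
     (\<forall>x\<in>grid r s. (x,x) \<in> T) \<and>
     trans T \<and>
     (\<forall>(x,y)\<in>T. \<forall>z\<in>grid r s. (meet_v x z, meet_v y z) \<in> T)"

definition saturated :: "nat \<Rightarrow> nat \<Rightarrow> vtx rel \<Rightarrow> bool" where
  "saturated r s T \<longleftrightarrow>
     (\<forall>L\<in>grid r s. \<forall>K\<in>grid r s. \<forall>H\<in>grid r s.
        le_v L K \<and> le_v K H \<and> (L,H) \<in> T \<longrightarrow> (K,H) \<in> T)"

definition Hull :: "nat \<Rightarrow> nat \<Rightarrow> vtx rel \<Rightarrow> vtx rel" where
  "Hull r s T = \<Inter> {T'. transfer_system r s T' \<and> saturated r s T' \<and> T \<subseteq> T'}"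

definition complete_ts :: "nat \<Rightarrow> nat \<Rightarrow> vtx rel" where
  "complete_ts r s = {(K,H). K \<in> grid r s \<and> H \<in> grid r s \<and> le_v K H}"

definition compatible :: "nat \<Rightarrow> nat \<Rightarrow> vtx rel \<Rightarrow> vtx rel \<Rightarrow> bool" where
  "compatible r s T T' \<longleftrightarrow> T \<subseteq> T' \<and>
     (\<forall>A\<in>grid r s. \<forall>B\<in>grid r s. \<forall>C\<in>grid r s.
        le_v B A \<and> le_v C A \<and> (B,A) \<in> T \<and> (meet_v B C, B) \<in> T' \<longrightarrow> (C,A) \<in> T')"

definition lesser_simply_paired :: "nat \<Rightarrow> nat \<Rightarrow> vtx rel \<Rightarrow> bool" where
  "lesser_simply_paired r s T \<longleftrightarrow>
     (\<forall>T'. transfer_system r s T' \<and> T \<subseteq> T' \<longrightarrow>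
        (compatible r s T T' \<longleftrightarrow> (T' = Hull r s T \<or> T' = complete_ts r s)))"

definition components :: "nat \<Rightarrow> nat \<Rightarrow> vtx rel \<Rightarrow> vtx set set" where
  "components r s T = grid r s // ((T \<union> T\<inverse>)\<^sup>*)"

end

theory Submission
  imports Defs
begin

definition Sv :: "nat \<Rightarrow> nat \<Rightarrow> vtx \<Rightarrow> vtx rel" where
  "Sv r s v = {(K,H). K \<in> grid r s \<and> H \<in> grid r s \<and> le_v K H \<and> (le_v v K \<or> \<not> le_v v H)}"

lemma meet_grid: "x \<in> grid r s \<Longrightarrow> z \<in> grid r s \<Longrightarrow> meet_v x z \<in> grid r s"
  by (auto simp: grid_def meet_v_def)

lemma ts_Sv: "transfer_system r s (Sv r s v)"
  unfolding transfer_system_def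
proof (intro conjI)
  show "trans (Sv r s v)"
    by (auto simp: trans_def Sv_def le_v_def)
  show "\<forall>(x, y)\<in>Sv r s v. \<forall>z\<in>grid r s. (meet_v x z, meet_v y z) \<in> Sv r s v"
    by (auto simp: Sv_def grid_def le_v_def meet_v_def)
qed (auto simp: Sv_def le_v_def)

lemma sat_Sv: "saturated r s (Sv r s v)"
  by (auto simp: saturated_def Sv_def le_v_def)

lemma compat_sat:
  assumes "transfer_system r s S" "saturated r s S" "T \<subseteq> S"
  shows "compatible r s T S"
  unfolding compatible_def
proof (intro conjI ballI impI)
  show "T \<subseteq> S" by fact
  fix A B C assume g: "A \<in> grid r s" "B \<in> grid r s" "C \<in> grid r s"
    and h: "le_v B A \<and> le_v C A \<and> (B, A) \<in> T \<and> (meet_v B C, B) \<in> S"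
  have "trans S" using assms(1) by (simp add: transfer_system_def)
  hence "(meet_v B C, A) \<in> S" using h assms(3) by (meson subsetD transD)
  moreover have "le_v (meet_v B C) C" by (simp add: le_v_def meet_v_def)
  ultimately show "(C, A) \<in> S" using assms(2) g h meet_grid
    unfolding saturated_def by blast
qed

lemma T_sub_Sv:
  assumes ts: "transfer_system r s T" and vg: "v \<in> grid r s"
    and src: "\<forall>x. (x,v) \<in> T \<longrightarrow> x = v"
  shows "T \<subseteq> Sv r s v"
proof
  fix p assume p: "p \<in> T"
  obtain K H where pk: "p = (K,H)" by (cases p)
  have KH: "K \<in> grid r s" "H \<in> grid r s" "le_v K H"
    using ts p pk unfolding transfer_system_def by auto
  show "p \<in> Sv r s v"
  proof (cases "le_v v H")
    case True
    have "(meet_v K v, meet_v H v) \<in> T" using ts p pk vg unfolding transfer_system_def by auto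
    moreover have "meet_v H v = v" using True by (cases v, cases H, auto simp: meet_v_def le_v_def)
    ultimately have "meet_v K v = v" using src by metis
    hence "le_v v K" by (cases v, cases K, auto simp: meet_v_def le_v_def min_def split: if_splits)
    thus ?thesis using KH pk by (auto simp: Sv_def)
  next
    case False thus ?thesis using KH pk by (auto simp: Sv_def)
  qed
qed

lemma Sv_ne_complete:
  assumes "v \<in> grid r s" "v \<noteq> (0,0)"
  shows "Sv r s v \<noteq> complete_ts r s"
proof -
  have "((0,0), v) \<in> complete_ts r s" using assms by (auto simp: complete_ts_def grid_def le_v_def)
  moreover have "((0,0), v) \<notin> Sv r s v" using assms by (cases v, auto simp: Sv_def le_v_def)
  ultimately show ?thesis by auto
qed

lemma Sv_inj:
  assumes "v \<in> grid r s" "w \<in> grid r s" "v \<noteq> (0,0)" "w \<noteq> (0,0)" "v \<noteq> w"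
  shows "Sv r s v \<noteq> Sv r s w"
proof
  assume eq: "Sv r s v = Sv r s w"
  have n1: "((0,0), v) \<notin> Sv r s v" using assms by (cases v, auto simp: Sv_def le_v_def)
  have n2: "((0,0), w) \<notin> Sv r s w" using assms by (cases w, auto simp: Sv_def le_v_def)
  have m1: "((0,0),v) \<in> Sv r s w" if "\<not> le_v w v" using that assms(1) by (auto simp: Sv_def le_v_def grid_def)
  have m2: "((0,0),w) \<in> Sv r s v" if "\<not> le_v v w" using that assms(2) by (auto simp: Sv_def le_v_def grid_def)
  have "le_v w v" "le_v v w" using n1 n2 m1 m2 eq by auto
  thus False using assms(5) by (cases v, cases w, auto simp: le_v_def)
qed

lemma reach_grid:
  assumes ts: "transfer_system r s T" and "(a,x) \<in> (T \<union> T\<inverse>)\<^sup>*" "a \<in> grid r s"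
  shows "x \<in> grid r s"
  using assms(2,3)
proof (induction rule: rtrancl_induct)
  case (step y z) thus ?case using ts unfolding transfer_system_def by auto
qed simp

lemma source_exists:
  assumes ts: "transfer_system r s T" and X: "X \<in> components r s T"
  shows "\<exists>v\<in>X. v \<in> grid r s \<and> (\<forall>x. (x,v) \<in> T \<longrightarrow> x = v)"
proof -
  let ?R = "(T \<union> T\<inverse>)\<^sup>*"
  obtain a where a: "a \<in> grid r s" "X = ?R `` {a}"
    using X unfolding components_def quotient_def by auto
  have "a \<in> X" using a by auto
  then obtain v where v: "v \<in> X" and vmin: "\<forall>y. y \<in> X \<longrightarrow> fst v + snd v \<le> fst y + snd y"
    using ex_has_least_nat[of "\<lambda>x. x \<in> X" a "\<lambda>x. fst x + snd x"] by blast
  have vg: "v \<in> grid r s" using v a reach_grid[OF ts] by auto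
  have "\<forall>x. (x,v) \<in> T \<longrightarrow> x = v"
  proof (intro allI impI)
    fix x assume xv: "(x,v) \<in> T"
    have "(a,v) \<in> ?R" using v a by auto
    moreover have "(v,x) \<in> ?R" using xv by auto
    ultimately have "(a,x) \<in> ?R" by (rule rtrancl_trans)
    hence "x \<in> X" using a by auto
    hence "fst v + snd v \<le> fst x + snd x" using vmin by auto
    moreover have "le_v x v" using ts xv unfolding transfer_system_def by auto
    ultimately show "x = v" by (cases x, cases v, auto simp: le_v_def)
  qed
  thus ?thesis using v vg by auto
qed

lemma comp_disj:
  assumes "X \<in> components r s T" "Y \<in> components r s T" "v \<in> X" "v \<in> Y"
  shows "X = Y"
proof -
  let ?R = "(T \<union> T\<inverse>)\<^sup>*"
  obtain a where a: "X = ?R `` {a}" using assms(1) unfolding components_def quotient_def by auto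
  obtain b where b: "Y = ?R `` {b}" using assms(2) unfolding components_def quotient_def by auto
  have sym: "sym ?R" by (simp add: sym_Un_converse sym_rtrancl)
  have av: "(a,v) \<in> ?R" "(b,v) \<in> ?R" using a b assms by auto
  have "(a,b) \<in> ?R" using av sym by (meson rtrancl_trans symD)
  hence ab: "?R `` {a} = ?R `` {b}" using sym
    by (auto intro: rtrancl_trans dest: symD)
  thus ?thesis using a b by simp
qed

lemma three_elems:
  assumes "card A \<ge> 3"
  shows "\<exists>x y z. x \<in> A \<and> y \<in> A \<and> z \<in> A \<and> x \<noteq> y \<and> x \<noteq> z \<and> y \<noteq> z"
proof -
  have "finite A" using assms by (metis card.infinite not_numeral_le_zero)
  obtain x where x: "x \<in> A" using assms by fastforce
  have "card (A - {x}) \<ge> 2" using assms x \<open>finite A\<close> by auto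
  hence "A - {x} \<noteq> {}" by (metis card.empty not_numeral_le_zero)
  then obtain y where y: "y \<in> A - {x}" by blast
  have "card (A - {x} - {y}) \<ge> 1" using assms x y \<open>finite A\<close> by auto
  hence "A - {x} - {y} \<noteq> {}" by (metis card.empty not_one_le_zero)
  then obtain z where z: "z \<in> A - {x} - {y}" by blast
  show ?thesis using x y z by blast
qed

theorem mainTheorem12:
  fixes p q r s :: nat and T :: "vtx rel"
  assumes "prime p" and "prime q" and "p \<noteq> q"
    and "transfer_system r s T"
    and "card (components r s T) \<ge> 3"
  shows "\<not> lesser_simply_paired r s T"
proof
  assume lsp: "lesser_simply_paired r s T"
  note ts = assms(4)
  obtain X Y Z where XYZ: "X \<in> components r s T" "Y \<in> components r s T" "Z \<in> components r s T"
    "X \<noteq> Y" "X \<noteq> Z" "Y \<noteq> Z" using three_elems[OF assms(5)] by blast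
  obtain x where x: "x \<in> X" "x \<in> grid r s" "\<forall>u. (u,x) \<in> T \<longrightarrow> u = x"
    using source_exists[OF ts XYZ(1)] by blast
  obtain y where y: "y \<in> Y" "y \<in> grid r s" "\<forall>u. (u,y) \<in> T \<longrightarrow> u = y"
    using source_exists[OF ts XYZ(2)] by blast
  obtain z where z: "z \<in> Z" "z \<in> grid r s" "\<forall>u. (u,z) \<in> T \<longrightarrow> u = z"
    using source_exists[OF ts XYZ(3)] by blast
  have d: "x \<noteq> y" "x \<noteq> z" "y \<noteq> z" using comp_disj XYZ x y z by metis+
  have key: "Sv r s v = Hull r s T" if "v \<in> grid r s" "v \<noteq> (0,0)" "\<forall>u. (u,v) \<in> T \<longrightarrow> u = v" for v
  proof -
    have sub: "T \<subseteq> Sv r s v" using T_sub_Sv[OF ts] that by blast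
    have "compatible r s T (Sv r s v)" using compat_sat[OF ts_Sv sat_Sv sub] .
    hence "Sv r s v = Hull r s T \<or> Sv r s v = complete_ts r s"
      using lsp ts_Sv sub unfolding lesser_simply_paired_def by blast
    thus ?thesis using Sv_ne_complete that by blast
  qed
  show False
  proof (cases "x = (0,0)")
    case True
    hence "y \<noteq> (0,0)" "z \<noteq> (0,0)" using d by auto
    thus False using key y z Sv_inj d by metis
  next
    case False
    show False
    proof (cases "y = (0,0)")
      case True
      hence "z \<noteq> (0,0)" using d by auto
      thus False using key x z Sv_inj d \<open>x \<noteq> (0,0)\<close> by metis
    next
      case False
      thus False using key x y Sv_inj d \<open>x \<noteq> (0,0)\<close> by metis
    qed
  qed
qed

end
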